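(* Let $n\geq 2$, let $a,b$ be integers with $1\leq a<b\leq n$, and let $\sigma$ be an $(n-1)$-permutation. Then there exists a u-p-word for $n$-permutations of the form $\Diamond_{a,b}u_2u_3\cdots u_N$ with $\mathrm{red}(u_2u_3\cdots u_n)=\sigma$ if and only if either ($a=1$ and $\sigma=12\cdots(n-1)$) or ($b=n$ and $\sigma=(n-1)(n-2)\cdots 1$).
   Context: An $n$-permutation is a permutation $\pi_1\cdots\pi_n$ of $\{1,\ldots,n\}$. For a word $w$ of distinct numbers, $\mathrm{red}(w)$ is obtained by replacing the $i$-th smallest letter by $i$. For integers $1\leq a<b\leq n$, $\Diamond_{a,b}$ is a restricted wildcard symbol. Consider a word $u=\Diamond_{a,b}u_2u_3\cdots u_N$ with $N\geq n$ and $u_2,\ldots,u_N$ positive integers. Its factors of length $n$ are $u_iu_{i+1}\cdots u_{i+n-1}$ for $1\leq i\leq N-n+1$ (with $u_1=\Diamond_{a,b}$); each factor's integer letters must be pairwise distinct. The first factor $\Diamond_{a,b}u_2\cdots u_n$ covers exactly the $n$-permutations $\pi$ with $\pi_1\in\{a,b\}$ and $\mathrm{red}(\pi_2\cdots\pi_n)=\mathrm{red}(u_2\cdots u_n)$ (i.e., the wildcard is replaced by a value that becomes the $a$-th or $b$-th smallest entry); a factor $u_i\cdots u_{i+n-1}$ with $i\geq 2$ covers only the $n$-permutation $\mathrm{red}(u_i\cdots u_{i+n-1})$. Such a word is a u-p-word for $n$-permutations if every $n$-permutation is covered by exactly one of its length-$n$ factors. *)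

theory Defs
  imports Main
begin

definition perm_list :: "nat \<Rightarrow> nat list \<Rightarrow> bool" where
  "perm_list n p \<longleftrightarrow> length p = n \<and> set p = {1..n}"

definition red :: "nat list \<Rightarrow> nat list" where
  "red w = map (\<lambda>x. card {y \<in> set w. y \<le> x}) w"

(* The word u = Diamond_{a,b} u_2 ... u_N is represented by v = [u_2, ..., u_N],
   so N = length v + 1.  Factor i (1 <= i <= N-n+1):
   i = 1 : Diamond u_2 ... u_n, i.e. wildcard followed by take (n-1) v;
   i >= 2: u_i ... u_{i+n-1} = take n (drop (i-2) v). *)
definition covers :: "nat \<Rightarrow> nat \<Rightarrow> nat \<Rightarrow> nat list \<Rightarrow> nat \<Rightarrow> nat list \<Rightarrow> bool" where
  "covers n a b v i p \<longleftrightarrow>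
     (if i = 1 then hd p \<in> {a, b} \<and> red (tl p) = red (take (n - 1) v)
      else p = red (take n (drop (i - 2) v)))"

definition upword :: "nat \<Rightarrow> nat \<Rightarrow> nat \<Rightarrow> nat list \<Rightarrow> bool" where
  "upword n a b v \<longleftrightarrow>
     n \<le> length v + 1 \<and> 0 \<notin> set v \<and>
     distinct (take (n - 1) v) \<and>
     (\<forall>j. j + n \<le> length v \<longrightarrow> distinct (take n (drop j v))) \<and>
     (\<forall>p. perm_list n p \<longrightarrow>
        card {i \<in> {1..length v + 2 - n}. covers n a b v i p} = 1)"

end

theory Submission
  imports Defs "Graph_Theory.Euler"
begin

lemma length_red[simp]: "length (red w) = length w" by (simp add: red_def)

lemma red_nth: "i < length w \<Longrightarrow> red w ! i = card {y \<in> set w. y \<le> w!i}"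
  by (simp add: red_def)

lemma red_less_iff:
  assumes "i < length w" "j < length w"
  shows "red w ! i < red w ! j \<longleftrightarrow> w!i < w!j"
proof
  assume "w!i < w!j"
  hence "{y \<in> set w. y \<le> w!i} \<subset> {y \<in> set w. y \<le> w!j}" using assms by force
  thus "red w ! i < red w ! j" using assms by (simp add: red_nth psubset_card_mono)
next
  assume "red w ! i < red w ! j"
  show "w!i < w!j"
  proof (rule ccontr)
    assume "\<not> w!i < w!j"
    hence "{y \<in> set w. y \<le> w!j} \<subseteq> {y \<in> set w. y \<le> w!i}" by auto
    hence "red w ! j \<le> red w ! i" using assms by (simp add: red_nth card_mono)
    thus False using \<open>red w ! i < red w ! j\<close> by simp
  qed
qed

lemma red_nth_distinct:
  assumes "distinct w" "i < length w"
  shows "red w ! i = card {j. j < length w \<and> w!j \<le> w!i}"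
proof -
  have "{y \<in> set w. y \<le> w!i} = (nth w) ` {j. j < length w \<and> w!j \<le> w!i}"
    by (auto simp: in_set_conv_nth)
  moreover have "inj_on (nth w) {j. j < length w \<and> w!j \<le> w!i}"
    using assms(1) by (auto simp: inj_on_def nth_eq_iff_index_eq)
  ultimately show ?thesis using assms by (simp add: red_nth card_image)
qed

definition samepat :: "nat list \<Rightarrow> nat list \<Rightarrow> bool" where
  "samepat x y \<longleftrightarrow> length x = length y \<and> (\<forall>i<length x. \<forall>j<length x. x!i < x!j \<longleftrightarrow> y!i < y!j)"

lemma red_eqI:
  assumes "distinct x" "distinct y" "samepat x y"
  shows "red x = red y"
proof (rule nth_equalityI)
  show "length (red x) = length (red y)" using assms by (simp add: samepat_def)
  fix i assume i: "i < length (red x)"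
  have "{j. j < length x \<and> x!j \<le> x!i} = {j. j < length y \<and> y!j \<le> y!i}"
    using assms i unfolding samepat_def by (auto simp: not_less[symmetric])
  thus "red x ! i = red y ! i" using assms i by (simp add: red_nth_distinct samepat_def)
qed

lemma distinct_red: "distinct (red w) \<longleftrightarrow> distinct w"
proof -
  have "red w ! i = red w ! j \<longleftrightarrow> w!i = w!j" if "i < length w" "j < length w" for i j
    using red_less_iff[OF that] red_less_iff[OF that(2,1)] by (metis linorder_neqE_nat order_less_irrefl)
  thus ?thesis by (auto simp: distinct_conv_nth)
qed

lemma perm_list_distinct: "perm_list k p \<Longrightarrow> distinct p"
  unfolding perm_list_def by (metis card_atLeastAtMost card_distinct diff_Suc_1)

lemma red_perm: assumes "perm_list k p" shows "red p = p"
proof (rule nth_equalityI)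
  fix i assume i: "i < length (red p)"
  have "p!i \<in> {1..k}" using assms i unfolding perm_list_def by (metis length_red nth_mem)
  hence "{y \<in> set p. y \<le> p!i} = {1..p!i}" using assms unfolding perm_list_def by auto
  thus "red p ! i = p ! i" using i \<open>p!i \<in> {1..k}\<close> by (simp add: red_nth)
qed simp

lemma red_perm_list: assumes "distinct w" shows "perm_list (length w) (red w)"
proof -
  have sub: "set (red w) \<subseteq> {1..length w}"
  proof
    fix z assume "z \<in> set (red w)"
    then obtain i where i: "i < length w" "z = red w ! i" by (auto simp: in_set_conv_nth)
    have "w!i \<in> {y \<in> set w. y \<le> w!i}" using i by simp
    hence "card {y \<in> set w. y \<le> w!i} \<ge> 1"
      by (metis (no_types, lifting) One_nat_def Suc_leI card_gt_0_iff empty_iff finite_set finite_subset mem_Collect_eq subsetI)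
    moreover have "card {y \<in> set w. y \<le> w!i} \<le> card (set w)" by (rule card_mono) auto
    ultimately show "z \<in> {1..length w}" using i assms by (simp add: red_nth distinct_card)
  qed
  have "card (set (red w)) = length w" using assms distinct_red by (metis distinct_card length_red)
  hence "set (red w) = {1..length w}" using sub by (intro card_subset_eq) auto
  thus ?thesis by (simp add: perm_list_def)
qed

lemma samepat_red: "samepat w (red w)" by (simp add: samepat_def red_less_iff)

lemma samepat_sym: "samepat x y \<Longrightarrow> samepat y x" by (auto simp: samepat_def)
lemma samepat_trans: "samepat x y \<Longrightarrow> samepat y z \<Longrightarrow> samepat x z" by (auto simp: samepat_def)

lemma samepat_take_drop: "samepat x y \<Longrightarrow> samepat (take k (drop j x)) (take k (drop j y))"
  unfolding samepat_def by (auto simp: min_def)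

lemma red_window_red:
  assumes "distinct w"
  shows "red (take k (drop j (red w))) = red (take k (drop j w))"
  apply (rule red_eqI)
  using assms distinct_red apply (metis distinct_drop distinct_take)
  using assms apply simp
  by (rule samepat_sym, rule samepat_take_drop, rule samepat_red)

lemma red_take_red: "distinct w \<Longrightarrow> red (take k (red w)) = red (take k w)"
  using red_window_red[of w k 0] by simp
lemma red_drop_red: "distinct w \<Longrightarrow> red (drop j (red w)) = red (drop j w)"
  using red_window_red[of w "length w" j] by simp

lemma red_map_mono:
  assumes "distinct w" "\<And>x y. x < y \<Longrightarrow> f x < f y"
  shows "red (map f w) = red w"
proof -
  have inj: "inj f" using assms(2) by (metis injI linorder_neqE_nat order_less_irrefl)
  show ?thesis
    apply (rule red_eqI)
    using assms inj apply (simp add: distinct_map inj_on_def)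
     apply (rule assms)
    using assms(2) unfolding samepat_def
    by (metis length_map linorder_neqE_nat nth_map order_less_asym order_less_irrefl)
qed

lemma red_eq_samepat:
  assumes "distinct x" "distinct y" "red x = red y"
  shows "samepat x y"
  by (metis assms(3) samepat_red samepat_sym samepat_trans)

lemma red_inj_set:
  assumes "distinct x" "distinct y" "set x = set y" "red x = red y"
  shows "x = y"
proof (rule nth_equalityI)
  show len: "length x = length y" using assms by (metis length_red)
  fix i assume i: "i < length x"
  have eq: "card {z \<in> set x. z \<le> x!i} = card {z \<in> set x. z \<le> y!i}"
    using assms(3,4) i len red_nth by (metis)
  show "x!i = y!i"
  proof (rule ccontr)
    assume "x!i \<noteq> y!i"
    moreover have "x!i \<in> set x" "y!i \<in> set x" using i len assms(3) by auto
    ultimately have "card {z \<in> set x. z \<le> x!i} < card {z \<in> set x. z \<le> y!i} \<or>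
                     card {z \<in> set x. z \<le> y!i} < card {z \<in> set x. z \<le> x!i}"
    proof (cases "x!i < y!i")
      case True
      have "{z \<in> set x. z \<le> x!i} \<subseteq> {z \<in> set x. z \<le> y!i}" using True by auto
      moreover have "y!i \<in> {z \<in> set x. z \<le> y!i}" "y!i \<notin> {z \<in> set x. z \<le> x!i}"
        using True \<open>y!i \<in> set x\<close> by auto
      ultimately have "{z \<in> set x. z \<le> x!i} \<subset> {z \<in> set x. z \<le> y!i}" by blast
      thus ?thesis by (simp add: psubset_card_mono)
    next
      case False
      hence "y!i < x!i" using \<open>x!i \<noteq> y!i\<close> by simp
      have "{z \<in> set x. z \<le> y!i} \<subseteq> {z \<in> set x. z \<le> x!i}" using \<open>y!i < x!i\<close> by auto
      moreover have "x!i \<in> {z \<in> set x. z \<le> x!i}" "x!i \<notin> {z \<in> set x. z \<le> y!i}"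
        using \<open>y!i < x!i\<close> \<open>x!i \<in> set x\<close> by auto
      ultimately have "{z \<in> set x. z \<le> y!i} \<subset> {z \<in> set x. z \<le> x!i}" by blast
      thus ?thesis by (simp add: psubset_card_mono)
    qed
    thus False using eq by simp
  qed
qed

lemma perm_list_upt: "perm_list k [1..<Suc k]"
  unfolding perm_list_def set_upt length_upt by (auto simp del: upt_Suc)
lemma perm_list_rev_upt: "perm_list k (rev [1..<Suc k])"
  unfolding perm_list_def set_upt set_rev length_upt length_rev by (auto simp del: upt_Suc)

lemma perm_list_finite: "finite {p. perm_list k p}"
proof -
  have "{p. perm_list k p} \<subseteq> {xs. set xs \<subseteq> {1..k} \<and> length xs = k}"
    by (auto simp: perm_list_def)
  thus ?thesis using finite_lists_length_eq[of "{1..k}" k] by (metis finite_atLeastAtMost finite_subset)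
qed

definition ins :: "nat \<Rightarrow> nat list \<Rightarrow> nat list" where
  "ins c s = c # map (\<lambda>x. if x < c then x else Suc x) s"

lemma ins_props:
  assumes "perm_list m s" "1 \<le> c" "c \<le> Suc m"
  shows "perm_list (Suc m) (ins c s)" "hd (ins c s) = c" "red (tl (ins c s)) = s"
proof -
  define f where "f = (\<lambda>x::nat. if x < c then x else Suc x)"
  have img: "f ` {1..m} = {1..Suc m} - {c}"
  proof
    show "f ` {1..m} \<subseteq> {1..Suc m} - {c}" unfolding f_def by auto
    show "{1..Suc m} - {c} \<subseteq> f ` {1..m}"
    proof
      fix y assume y: "y \<in> {1..Suc m} - {c}"
      show "y \<in> f ` {1..m}"
      proof (cases "y < c")
        case True
        hence "f y = y" "y \<in> {1..m}" using y assms unfolding f_def by auto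
        thus ?thesis by (metis imageI)
      next
        case False
        hence "f (y - 1) = y" "y - 1 \<in> {1..m}" using y assms unfolding f_def by auto
        thus ?thesis by (metis imageI)
      qed
    qed
  qed
  have e: "ins c s = c # map f s" by (simp add: ins_def f_def)
  have "set (ins c s) = insert c (f ` {1..m})" using assms(1) e by (simp add: perm_list_def)
  also have "\<dots> = {1..Suc m}" using img assms(2,3) by auto
  finally show "perm_list (Suc m) (ins c s)" using assms(1) e by (simp add: perm_list_def)
  show "hd (ins c s) = c" by (simp add: ins_def)
  have "red (map f s) = red s"
    by (rule red_map_mono) (auto simp: perm_list_distinct[OF assms(1)] f_def)
  thus "red (tl (ins c s)) = s" using e by (simp add: red_perm[OF assms(1)])
qed

lemma hd_tl_unique:
  assumes "perm_list k p" "perm_list k p'" "hd p = hd p'" "red (tl p) = red (tl p')"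
  shows "p = p'"
proof (cases p)
  case Nil thus ?thesis using assms by (auto simp: perm_list_def)
next
  case (Cons x xs)
  obtain x' xs' where p': "p' = x' # xs'" using assms Cons unfolding perm_list_def
    by (metis length_0_conv list.exhaust list.simps(3))
  have d: "distinct (x#xs)" "distinct (x'#xs')"
    using perm_list_distinct[OF assms(1)] perm_list_distinct[OF assms(2)] Cons p' by simp_all
  have "x = x'" using assms(3) Cons p' by simp
  have "set p = set p'" using assms by (simp add: perm_list_def)
  hence "set xs = set xs'" using d Cons p' \<open>x = x'\<close> by auto
  moreover have "red xs = red xs'" using assms(4) Cons p' by simp
  ultimately have "xs = xs'" using d by (simp add: red_inj_set)
  thus ?thesis using Cons p' \<open>x = x'\<close> by simp
qed

lemma monotone_perm:
  assumes "perm_list (Suc m) p" "red (take m p) = red (drop 1 p)" "m \<ge> 1"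
  shows "p = [1..<Suc (Suc m)] \<or> p = rev [1..<Suc (Suc m)]"
proof -
  have d: "distinct p" using perm_list_distinct[OF assms(1)] .
  have len: "length p = Suc m" using assms(1) by (simp add: perm_list_def)
  have sp: "samepat (take m p) (drop 1 p)"
    using d assms(2) by (intro red_eq_samepat) auto
  have step: "p!i < p!Suc i \<longleftrightarrow> p!Suc i < p!Suc (Suc i)" if "Suc i < m" for i
  proof -
    have a: "take m p ! i = p!i" "take m p ! Suc i = p ! Suc i" using that by auto
    have b: "drop 1 p ! i = p!Suc i" "drop 1 p ! Suc i = p ! Suc (Suc i)" using that len by auto
    have "i < length (take m p)" "Suc i < length (take m p)" using that len by auto
    thus ?thesis using sp a b unfolding samepat_def by metis
  qed
  have all: "p!i < p!Suc i \<longleftrightarrow> p!0 < p!1" if "i < m" for i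
    using that
  proof (induction i)
    case 0 thus ?case by simp
  next
    case (Suc i) thus ?case using step[of i] by simp
  qed
  have ne: "p!i \<noteq> p!j" if "i < Suc m" "j < Suc m" "i \<noteq> j" for i j
    using d that len by (simp add: nth_eq_iff_index_eq)
  have setp: "set p = {1..Suc m}" using assms(1) by (simp add: perm_list_def)
  have U: "sorted [1..<Suc (Suc m)]" "distinct [1..<Suc (Suc m)]" "set [1..<Suc (Suc m)] = {1..Suc m}"
    by (simp_all del: upt_Suc add: atLeastLessThanSuc_atLeastAtMost)
  show ?thesis
  proof (cases "p!0 < p!1")
    case True
    have "\<forall>i. Suc i < length p \<longrightarrow> p!i < p!Suc i"
    proof (intro allI impI)
      fix i assume "Suc i < length p"
      hence "i < m" using len by simp
      thus "p!i < p!Suc i" using all[of i] True by simp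
    qed
    hence "sorted_wrt (<) p" by (simp add: sorted_wrt_iff_nth_Suc_transp)
    hence "sorted p" by (metis strict_sorted_imp_sorted)
    hence "p = [1..<Suc (Suc m)]"
      using d setp U by (metis sorted_distinct_set_unique)
    thus ?thesis by simp
  next
    case False
    have "\<forall>i. Suc i < length p \<longrightarrow> p!Suc i < p!i"
    proof (intro allI impI)
      fix i assume "Suc i < length p"
      hence "i < m" using len by simp
      thus "p!Suc i < p!i" using all[of i] False ne[of i "Suc i"] len by auto
    qed
    hence "sorted_wrt (>) p" by (simp add: sorted_wrt_iff_nth_Suc_transp)
    hence "sorted_wrt (<) (rev p)" by (simp add: sorted_wrt_rev)
    hence "sorted (rev p)" by (metis strict_sorted_imp_sorted)
    hence "rev p = [1..<Suc (Suc m)]"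
      using d setp U by (metis sorted_distinct_set_unique distinct_rev set_rev)
    hence "p = rev [1..<Suc (Suc m)]" by (metis rev_rev_ident)
    thus ?thesis by simp
  qed
qed

definition PG :: "nat \<Rightarrow> (nat list, nat list) pre_digraph" where
  "PG m = \<lparr>verts = {t. perm_list m t}, arcs = {p. perm_list (Suc m) p},
           tail = \<lambda>p. red (take m p), head = \<lambda>p. red (drop 1 p)\<rparr>"

lemma PG_simps[simp]: "verts (PG m) = {t. perm_list m t}" "arcs (PG m) = {p. perm_list (Suc m) p}"
  "tail (PG m) = (\<lambda>p. red (take m p))" "head (PG m) = (\<lambda>p. red (drop 1 p))"
  by (simp_all add: PG_def)

lemma perm_list_len: "perm_list k p \<Longrightarrow> length p = k" by (simp add: perm_list_def)

lemma PG_fin: "fin_digraph (PG m)"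
proof
  fix e assume "e \<in> arcs (PG m)"
  hence e: "perm_list (Suc m) e" by simp
  have d: "distinct e" using perm_list_distinct[OF e] .
  have "perm_list (length (take m e)) (red (take m e))" using d by (intro red_perm_list) simp
  thus "tail (PG m) e \<in> verts (PG m)" using perm_list_len[OF e] by simp
  have "perm_list (length (drop 1 e)) (red (drop 1 e))" using d by (intro red_perm_list) simp
  thus "head (PG m) e \<in> verts (PG m)" using perm_list_len[OF e] by simp
qed (simp_all add: perm_list_finite)

fun wk :: "nat \<Rightarrow> nat list \<Rightarrow> nat list list \<Rightarrow> nat list \<Rightarrow> bool" where
  "wk m u [] v = (u = v)"
| "wk m u (e # es) v = (red (take m e) = u \<and> wk m (red (drop 1 e)) es v)"

lemma cas_wk: "pre_digraph.cas (PG m) u p v = wk m u p v"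
  by (induction p arbitrary: u) (simp_all add: pre_digraph.cas.simps)

lemma wk_append: "wk m u (p @ q) v \<longleftrightarrow> (\<exists>w. wk m u p w \<and> wk m w q v)"
  by (induction p arbitrary: u) auto

lemma wk_filter_loop:
  assumes "wk m u p v" "red (take m e) = red (drop 1 e)"
  shows "wk m u (filter (\<lambda>x. x \<noteq> e) p) v"
  using assms by (induction p arbitrary: u) auto

lemma arc_of_window:
  assumes "distinct w" "Suc m \<le> length w"
  shows "red (take (Suc m) w) \<in> arcs (PG m)"
    "tail (PG m) (red (take (Suc m) w)) = red (take m w)"
    "head (PG m) (red (take (Suc m) w)) = red (take m (drop 1 w))"
proof -
  have d: "distinct (take (Suc m) w)" using assms by simp
  have l: "length (take (Suc m) w) = Suc m" using assms by simp
  show "red (take (Suc m) w) \<in> arcs (PG m)" using red_perm_list[OF d] l by simp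
  show "tail (PG m) (red (take (Suc m) w)) = red (take m w)"
    using red_take_red[OF d, of m] by (simp add: min_def)
  show "head (PG m) (red (take (Suc m) w)) = red (take m (drop 1 w))"
    using red_drop_red[OF d, of 1] by (simp add: drop_take)
qed

lemma window_reach:
  assumes "distinct w" "m \<le> length w"
  shows "red (take m w) \<rightarrow>\<^sup>*\<^bsub>PG m\<^esub> red (drop (length w - m) w)"
  using assms
proof (induction w)
  case Nil
  interpret fin_digraph "PG m" by (rule PG_fin)
  have "perm_list 0 (red [])" using red_perm_list[of "[]"] by simp
  hence "red [] \<in> verts (PG m)" using Nil by simp
  hence "red [] \<rightarrow>\<^sup>*\<^bsub>PG m\<^esub> red []" by (rule reachable_refl)
  thus ?case by simp
next
  case (Cons x w)
  interpret fin_digraph "PG m" by (rule PG_fin)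
  show ?case
  proof (cases "m \<le> length w")
    case True
    have IH: "red (take m w) \<rightarrow>\<^sup>*\<^bsub>PG m\<^esub> red (drop (length w - m) w)" using Cons True by simp
    have A: "red (take (Suc m) (x#w)) \<in> arcs (PG m)"
      "tail (PG m) (red (take (Suc m) (x#w))) = red (take m (x#w))"
      "head (PG m) (red (take (Suc m) (x#w))) = red (take m w)"
      using arc_of_window[of "x#w" m] Cons.prems True by auto
    have "red (take m (x#w)) \<rightarrow>\<^bsub>PG m\<^esub> red (take m w)"
      unfolding arcs_ends_conv by (rule rev_image_eqI[OF A(1)]) (simp only: A(2,3))
    moreover have "drop (length (x#w) - m) (x#w) = drop (length w - m) w"
      using True by (simp add: Suc_diff_le)
    ultimately show ?thesis using IH by (metis adj_reachable_trans)
  next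
    case False
    hence "length (x#w) = m" using Cons.prems by simp
    moreover have "perm_list (length (x#w)) (red (x#w))" using red_perm_list Cons.prems by blast
    ultimately show ?thesis by simp
  qed
qed

lemma PG_connected: "connected (PG m)"
proof -
  interpret fin_digraph "PG m" by (rule PG_fin)
  show ?thesis
  proof (rule connectedI)
    show "verts (PG m) \<noteq> {}" using perm_list_upt by auto
    fix u v assume u: "u \<in> verts (PG m)" and v: "v \<in> verts (PG m)"
    have pu: "perm_list m u" and pv: "perm_list m v" using u v by auto
    define w where "w = u @ map (\<lambda>x. x + m) v"
    have "distinct w" unfolding w_def using perm_list_distinct[OF pu] perm_list_distinct[OF pv] pu pv
      by (auto simp: distinct_map inj_on_def perm_list_def)
    moreover have "m \<le> length w" using pu pv by (simp add: w_def perm_list_len)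
    ultimately have r: "red (take m w) \<rightarrow>\<^sup>*\<^bsub>PG m\<^esub> red (drop (length w - m) w)" by (rule window_reach)
    have "take m w = u" using pu by (simp add: w_def perm_list_len)
    moreover have "drop (length w - m) w = map (\<lambda>x. x + m) v" using pu pv by (simp add: w_def perm_list_len)
    moreover have "red (map (\<lambda>x. x + m) v) = v"
      using red_map_mono[of v "\<lambda>x. x + m"] perm_list_distinct[OF pv] red_perm[OF pv] by simp
    ultimately have "u \<rightarrow>\<^sup>*\<^bsub>PG m\<^esub> v" using r red_perm[OF pu] by simp
    thus "u \<rightarrow>\<^sup>*\<^bsub>mk_symmetric (PG m)\<^esub> v" by (rule reachable_mk_symmetricI)
  qed
qed

lemma PG_balanced: "in_degree (PG m) t = out_degree (PG m) t"
proof -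
  have "rotate1 ` in_arcs (PG m) t = out_arcs (PG m) t"
  proof
    show "rotate1 ` in_arcs (PG m) t \<subseteq> out_arcs (PG m) t"
    proof
      fix q assume "q \<in> rotate1 ` in_arcs (PG m) t"
      then obtain p where p: "perm_list (Suc m) p" "red (drop 1 p) = t" "q = rotate1 p"
        by (auto simp: in_arcs_def)
      obtain x xs where px: "p = x # xs" using p(1) unfolding perm_list_def by (cases p) auto
      have "length xs = m" using p(1) px by (simp add: perm_list_def)
      hence "take m q = xs" using p(3) px by simp
      moreover have "perm_list (Suc m) q" using p(1) p(3) by (simp add: perm_list_def)
      ultimately show "q \<in> out_arcs (PG m) t" using p(2) px by (simp add: out_arcs_def)
    qed
    show "out_arcs (PG m) t \<subseteq> rotate1 ` in_arcs (PG m) t"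
    proof
      fix q assume "q \<in> out_arcs (PG m) t"
      hence q: "perm_list (Suc m) q" "red (take m q) = t" by (auto simp: out_arcs_def)
      have ne: "q \<noteq> []" using q(1) by (auto simp: perm_list_def)
      define p where "p = last q # butlast q"
      have rp: "rotate1 p = q" using ne by (simp add: p_def)
      hence "set p = set q" "length p = length q" by (metis set_rotate1, metis length_rotate1)
      hence "perm_list (Suc m) p" using q(1) by (simp add: perm_list_def)
      moreover note rp
      moreover have "drop 1 p = take m q" using q(1) by (simp add: p_def perm_list_def butlast_conv_take)
      ultimately show "q \<in> rotate1 ` in_arcs (PG m) t" using q(2) by (auto simp: in_arcs_def)
    qed
  qed
  moreover have "inj_on rotate1 (in_arcs (PG m) t)" by (rule inj_on_subset[OF inj_rotate1]) simp
  ultimately show ?thesis unfolding in_degree_def out_degree_def by (metis card_image)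
qed

lemma euler_walk:
  assumes "e0 \<in> arcs (PG m)" "red (drop 1 e0) = s" "red (take m e0) = red (drop 1 e0)"
    "e1 \<in> arcs (PG m)" "red (drop 1 e1) = s"
  shows "\<exists>q t. distinct q \<and> set q = arcs (PG m) - {e0, e1} \<and> wk m s q t"
proof -
  interpret fin_digraph "PG m" by (rule PG_fin)
  obtain u p where et: "euler_trail u p u"
    using closed_euler1[OF PG_connected PG_balanced] by blast
  hence dp: "distinct p" and sp: "set p = arcs (PG m)" and cp: "wk m u p u"
    by (auto simp: euler_trail_def trail_def awalk_def cas_wk)
  obtain p1 p2 where pp: "p = p1 @ e1 # p2" using sp assms(4) by (metis split_list)
  from cp pp obtain w where w1: "wk m u p1 w" and w2: "wk m w (e1 # p2) u"
    using wk_append by blast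
  from w2 have w3: "wk m s p2 u" using assms(5) by simp
  have "wk m s (p2 @ p1) w" using w1 w3 wk_append by blast
  hence "wk m s (filter (\<lambda>x. x \<noteq> e0) (p2 @ p1)) w"
    using wk_filter_loop assms(3) by blast
  moreover have "distinct (filter (\<lambda>x. x \<noteq> e0) (p2 @ p1))" using dp pp by auto
  moreover have "set (filter (\<lambda>x. x \<noteq> e0) (p2 @ p1)) = arcs (PG m) - {e0, e1}"
    using dp pp sp by auto
  ultimately show ?thesis by blast
qed

lemma key_window:
  assumes e: "perm_list (Suc m) e" and dy: "distinct y" and ly: "length y = m"
    and y0: "0 \<notin> set y" and ry: "red y = red (take m e)"
  defines "x0 \<equiv> Suc (2 * Max (insert 0 {y!i | i. i < m \<and> e!i < e!m}))"
  shows "distinct (map (\<lambda>x. 2*x) y @ [x0]) \<and> red (map (\<lambda>x. 2*x) y @ [x0]) = e"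
proof -
  define S where "S = {y!i | i. i < m \<and> e!i < e!m}"
  define M where "M = Max (insert 0 S)"
  have x0: "x0 = Suc (2*M)" by (simp add: x0_def M_def S_def)
  have fin: "finite S" unfolding S_def by simp
  have de: "distinct e" using perm_list_distinct[OF e] .
  have le: "length e = Suc m" using e by (simp add: perm_list_def)
  have dte: "distinct (take m e)" using de by simp
  have sp: "samepat y (take m e)" using red_eq_samepat[OF dy dte ry] .
  have yy: "y!i < y!j \<longleftrightarrow> e!i < e!j" if "i < m" "j < m" for i j
    using sp that ly unfolding samepat_def by auto
  have lt: "2 * y!i < x0" if "i < m" "e!i < e!m" for i
  proof -
    have "y!i \<in> S" using that unfolding S_def by blast
    hence "y!i \<le> M" unfolding M_def using fin by simp
    thus ?thesis using x0 by simp
  qed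
  have gt: "x0 < 2 * y!i" if "i < m" "e!m < e!i" for i
  proof -
    have "M \<in> insert 0 S" unfolding M_def using fin by (intro Max_in) auto
    thus ?thesis
    proof
      assume "M = 0"
      moreover have "y!i \<noteq> 0" using y0 that ly by (metis nth_mem)
      ultimately show ?thesis using x0 by simp
    next
      assume "M \<in> S"
      then obtain k where k: "k < m" "e!k < e!m" "M = y!k" unfolding S_def by blast
      have "y!k < y!i" using yy[of k i] k that by simp
      thus ?thesis using x0 k by simp
    qed
  qed
  have neq: "e!i \<noteq> e!m" if "i < m" for i
    using de le that by (simp add: nth_eq_iff_index_eq)
  define Y where "Y = map (\<lambda>x. 2*x) y @ [x0]"
  have lY: "length Y = Suc m" using ly by (simp add: Y_def)
  have Yi: "Y!i = 2 * y!i" if "i < m" for i using that ly by (simp add: Y_def nth_append)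
  have Ym: "Y!m = x0" using ly by (simp add: Y_def nth_append)
  have dY: "distinct Y"
  proof -
    have "distinct (map (\<lambda>x. 2*x) y)" using dy by (simp add: distinct_map inj_on_def)
    moreover have "x0 \<notin> set (map (\<lambda>x. 2*x) y)" using x0 by auto presburger
    ultimately show ?thesis by (simp add: Y_def)
  qed
  have "samepat Y e"
    unfolding samepat_def
  proof (intro conjI allI impI)
    show "length Y = length e" using lY le by simp
    fix i j assume i: "i < length Y" and j: "j < length Y"
    show "Y!i < Y!j \<longleftrightarrow> e!i < e!j"
    proof (cases "i < m")
      case True note iT = True
      show ?thesis
      proof (cases "j < m")
        case True thus ?thesis using iT Yi yy by simp
      next
        case False hence "j = m" using j lY by simp
        thus ?thesis using iT Yi Ym lt gt neq[of i] by (metis linorder_neqE_nat order_less_asym)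
      qed
    next
      case False hence im: "i = m" using i lY by simp
      show ?thesis
      proof (cases "j < m")
        case True thus ?thesis using im Yi Ym lt gt neq[of j] by (metis linorder_neqE_nat order_less_asym)
      next
        case False hence "j = m" using j lY by simp
        thus ?thesis using im by simp
      qed
    qed
  qed
  hence "red Y = red e" using dY de by (intro red_eqI) auto
  thus ?thesis using dY red_perm[OF e] by (simp add: Y_def)
qed

lemma realize:
  assumes "perm_list m \<sigma>" "wk m \<sigma> q t" "\<forall>e\<in>set q. perm_list (Suc m) e"
  shows "\<exists>v. length v = length q + m \<and> 0 \<notin> set v \<and> red (take m v) = \<sigma> \<and>
    (\<forall>j<length q. distinct (take (Suc m) (drop j v)) \<and> red (take (Suc m) (drop j v)) = q!j) \<and>
    distinct (drop (length q) v) \<and> red (drop (length q) v) = t"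
  using assms(2,3)
proof (induction q arbitrary: t rule: rev_induct)
  case Nil
  hence "t = \<sigma>" by simp
  moreover have "0 \<notin> set \<sigma>" using assms(1) by (auto simp: perm_list_def)
  ultimately show ?case using assms(1) red_perm[OF assms(1)] perm_list_distinct[OF assms(1)]
    by (intro exI[of _ \<sigma>]) (simp add: perm_list_len)
next
  case (snoc e q)
  from snoc.prems(1) obtain w where wq: "wk m \<sigma> q w" and we: "wk m w [e] t"
    using wk_append by blast
  have tw: "red (take m e) = w" and th: "red (drop 1 e) = t" using we by auto
  have pe: "perm_list (Suc m) e" using snoc.prems(2) by simp
  obtain v where lv: "length v = length q + m" and v0: "0 \<notin> set v" and vs: "red (take m v) = \<sigma>"
    and vw: "\<forall>j<length q. distinct (take (Suc m) (drop j v)) \<and> red (take (Suc m) (drop j v)) = q!j"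
    and dy: "distinct (drop (length q) v)" and ry: "red (drop (length q) v) = w"
    using snoc.IH[OF wq] snoc.prems(2) by auto
  define y where "y = drop (length q) v"
  define x0 where "x0 = Suc (2 * Max (insert 0 {y!i | i. i < m \<and> e!i < e!m}))"
  define f where "f = (\<lambda>x::nat. 2*x)"
  define v' where "v' = map f v @ [x0]"
  have ly: "length y = m" using lv by (simp add: y_def)
  have y0: "0 \<notin> set y" using v0 by (auto simp: y_def dest: in_set_dropD)
  have K: "distinct (map f y @ [x0]) \<and> red (map f y @ [x0]) = e"
    using key_window[OF pe dy[folded y_def] ly y0] ry tw unfolding x0_def f_def y_def by simp
  have fm: "\<And>a b. a < b \<Longrightarrow> f a < f b" by (simp add: f_def)
  have win_new: "take (Suc m) (drop (length q) v') = map f y @ [x0]"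
    using lv ly by (simp add: v'_def y_def drop_map)
  have win_old: "take (Suc m) (drop j v') = map f (take (Suc m) (drop j v))" if "j < length q" for j
    using that lv by (simp add: v'_def drop_map take_map)
  have "length v' = length (q @ [e]) + m" using lv by (simp add: v'_def)
  moreover have "0 \<notin> set v'" using v0 by (auto simp: v'_def f_def x0_def)
  moreover have "red (take m v') = \<sigma>"
  proof -
    have "take m v' = map f (take m v)" using lv by (simp add: v'_def take_map)
    moreover have "distinct (take m v)" using vs perm_list_distinct[OF assms(1)] distinct_red by metis
    ultimately show ?thesis using red_map_mono[OF _ fm] vs by simp
  qed
  moreover have "\<forall>j<length (q @ [e]). distinct (take (Suc m) (drop j v')) \<and> red (take (Suc m) (drop j v')) = (q @ [e])!j"
  proof (intro allI impI)
    fix j assume "j < length (q @ [e])"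
    hence "j < length q \<or> j = length q" by auto
    thus "distinct (take (Suc m) (drop j v')) \<and> red (take (Suc m) (drop j v')) = (q @ [e])!j"
    proof
      assume j: "j < length q"
      have "distinct (map f (take (Suc m) (drop j v)))" using vw j fm
        by (simp add: distinct_map inj_on_def f_def)
      thus ?thesis using win_old[OF j] vw j red_map_mono[OF _ fm] by (simp add: nth_append)
    qed (use K win_new in simp)
  qed
  moreover have "drop (length (q @ [e])) v' = drop 1 (map f y @ [x0])"
    using lv ly by (simp add: v'_def y_def drop_map)
  moreover have "distinct (drop 1 (map f y @ [x0]))" using K by (metis distinct_drop)
  moreover have "red (drop 1 (map f y @ [x0])) = t"
    using red_drop_red[of "map f y @ [x0]" 1] K th by simp
  ultimately show ?case by metis
qed

lemma if_dir:
  assumes m1: "m \<ge> 1" and sg: "perm_list m \<sigma>" and ab: "1 \<le> a" "a < b" "b \<le> Suc m"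
    and c: "c = a \<or> c = b" and loop: "red (take m (ins c \<sigma>)) = \<sigma>"
  shows "\<exists>v. upword (Suc m) a b v \<and> red (take m v) = \<sigma>"
proof -
  define d where "d = (if c = a then b else a)"
  have cd: "{c, d} = {a, b}" "c \<noteq> d" using c ab by (auto simp: d_def)
  have c1: "1 \<le> c" "c \<le> Suc m" "1 \<le> d" "d \<le> Suc m" using c ab by (auto simp: d_def)
  define e0 where "e0 = ins c \<sigma>"
  define e1 where "e1 = ins d \<sigma>"
  note i0 = ins_props[OF sg c1(1,2), folded e0_def]
  note i1 = ins_props[OF sg c1(3,4), folded e1_def]
  have ne0: "e0 \<noteq> []" "e1 \<noteq> []" by (simp_all add: e0_def e1_def ins_def)
  have h0: "red (drop 1 e0) = \<sigma>" using i0(3) by (simp add: drop_Suc)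
  have h1: "red (drop 1 e1) = \<sigma>" using i1(3) by (simp add: drop_Suc)
  have l0: "red (take m e0) = red (drop 1 e0)" using h0 loop by (simp add: e0_def)
  obtain q t where dq: "distinct q" and sq: "set q = arcs (PG m) - {e0, e1}" and wq: "wk m \<sigma> q t"
    using euler_walk[of e0 m \<sigma> e1] i0(1) i1(1) h0 h1 l0 by auto
  have pq: "\<forall>e\<in>set q. perm_list (Suc m) e" using sq by auto
  obtain v where lv: "length v = length q + m" and v0: "0 \<notin> set v" and vs: "red (take m v) = \<sigma>"
    and vw: "\<forall>j<length q. distinct (take (Suc m) (drop j v)) \<and> red (take (Suc m) (drop j v)) = q!j"
    using realize[OF sg wq pq] by blast
  have F: "p = e0 \<or> p = e1" if "perm_list (Suc m) p" "hd p \<in> {a, b}" "red (tl p) = \<sigma>" for p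
  proof -
    have "hd p = c \<or> hd p = d" using that cd by auto
    thus ?thesis
    proof
      assume "hd p = c" thus ?thesis using hd_tl_unique[OF that(1) i0(1)] i0 that by simp
    next
      assume "hd p = d" thus ?thesis using hd_tl_unique[OF that(1) i1(1)] i1 that by simp
    qed
  qed
  have "upword (Suc m) a b v"
    unfolding upword_def
  proof (intro conjI allI impI)
    show "Suc m \<le> length v + 1" using lv by simp
    show "0 \<notin> set v" by fact
    show "distinct (take (Suc m - 1) v)" using vs perm_list_distinct[OF sg] distinct_red by fastforce
    fix j assume "j + Suc m \<le> length v"
    hence "j < length q" using lv by simp
    thus "distinct (take (Suc m) (drop j v))" using vw by simp
  next
    fix p assume pp: "perm_list (Suc m) p"
    let ?I = "{i \<in> {1..length v + 2 - Suc m}. covers (Suc m) a b v i p}"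
    have rng: "length v + 2 - Suc m = length q + 1" using lv by simp
    have cov2: "covers (Suc m) a b v i p \<longleftrightarrow> p = q ! (i - 2)" if "2 \<le> i" "i \<le> length q + 1" for i
      using vw that by (auto simp: covers_def)
    show "card ?I = 1"
    proof (cases "p = e0 \<or> p = e1")
      case True
      hence "p \<notin> set q" using sq by auto
      have "?I = {1}"
      proof (rule set_eqI)
        fix i
        show "i \<in> ?I \<longleftrightarrow> i \<in> {1}"
        proof (cases "i = 1")
          case True thus ?thesis using \<open>p = e0 \<or> p = e1\<close> i0 i1 cd vs lv
            by (auto simp: covers_def rng)
        next
          case False
          { assume "i \<in> ?I"
            hence "2 \<le> i" "i \<le> length q + 1" "covers (Suc m) a b v i p" using False rng by auto
            hence "p = q ! (i - 2)" using cov2 by blast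
            moreover have "i - 2 < length q" using \<open>2 \<le> i\<close> \<open>i \<le> length q + 1\<close> by simp
            ultimately have False using \<open>p \<notin> set q\<close> by simp }
          thus ?thesis using False by auto
        qed
      qed
      thus ?thesis by simp
    next
      case False
      hence "p \<in> set q" using sq pp by auto
      then obtain k where k: "k < length q" "q ! k = p" by (auto simp: in_set_conv_nth)
      have "?I = {k + 2}"
      proof (rule set_eqI)
        fix i
        show "i \<in> ?I \<longleftrightarrow> i \<in> {k + 2}"
        proof (cases "i = 1")
          case True
          have "\<not> covers (Suc m) a b v 1 p" using F[OF pp] False vs by (auto simp: covers_def)
          thus ?thesis using True by auto
        next
          case False
          show ?thesis
          proof
            assume "i \<in> ?I"
            hence "2 \<le> i" "i \<le> length q + 1" "covers (Suc m) a b v i p" using False rng by auto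
            hence "q ! k = q ! (i - 2)" using cov2 k by simp
            hence "k = i - 2" using dq k \<open>2 \<le> i\<close> \<open>i \<le> length q + 1\<close> by (simp add: nth_eq_iff_index_eq)
            thus "i \<in> {k + 2}" using \<open>2 \<le> i\<close> by simp
          next
            assume "i \<in> {k + 2}"
            hence "i = k + 2" by simp
            thus "i \<in> ?I" using cov2[of i] k rng by simp
          qed
        qed
      qed
      thus ?thesis by simp
    qed
  qed
  thus ?thesis using vs by blast
qed

lemma card_one_eq: "card I = 1 \<Longrightarrow> x \<in> I \<Longrightarrow> y \<in> I \<Longrightarrow> x = y"
  by (metis card_1_singletonE singletonD)

lemma only_if_loop:
  assumes m1: "m \<ge> 1" and sg: "perm_list m \<sigma>" and ab: "1 \<le> a" "a < b" "b \<le> Suc m"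
    and up: "upword (Suc m) a b v" and vs: "red (take m v) = \<sigma>"
  shows "\<exists>p. perm_list (Suc m) p \<and> hd p \<in> {a, b} \<and> red (tl p) = \<sigma> \<and> red (take m p) = \<sigma>"
proof (rule ccontr)
  assume nl: "\<not> ?thesis"
  define K where "K = length v - m"
  have lv: "length v = K + m" using up by (simp add: upword_def K_def)
  have rng: "length v + 2 - Suc m = K + 1" using lv by simp
  define W where "W = (\<lambda>j. take (Suc m) (drop j v))"
  define fw where "fw = (\<lambda>j. red (W j))"
  have dW: "distinct (W j)" if "j < K" for j using up that lv by (simp add: upword_def W_def)
  have lW: "length (W j) = Suc m" if "j < K" for j using that lv by (simp add: W_def)
  have pfw: "perm_list (Suc m) (fw j)" if "j < K" for j
    using red_perm_list[OF dW[OF that]] lW[OF that] by (simp add: fw_def)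
  define Perm where "Perm = {p. perm_list (Suc m) p}"
  define F where "F = {p \<in> Perm. hd p \<in> {a, b} \<and> red (tl p) = \<sigma>}"
  define I where "I = (\<lambda>p. {i \<in> {1..length v + 2 - Suc m}. covers (Suc m) a b v i p})"
  have cI: "card (I p) = 1" if "p \<in> Perm" for p using up that by (simp add: upword_def I_def Perm_def)
  have I1: "1 \<in> I p" if "p \<in> F" for p using that vs lv by (simp add: I_def F_def covers_def)
  have I1': "1 \<notin> I p" if "p \<notin> F" "p \<in> Perm" for p using that vs by (auto simp: I_def F_def covers_def)
  have Ij: "j + 2 \<in> I p \<longleftrightarrow> j < K \<and> fw j = p" for j p
    using lv by (auto simp: I_def covers_def fw_def W_def)
  have C1: "fw j \<noteq> p" if "p \<in> F" "j < K" for p j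
  proof
    assume "fw j = p"
    hence "j + 2 \<in> I p" using Ij that by simp
    moreover have "p \<in> Perm" using that F_def by simp
    ultimately show False using card_one_eq[OF cI I1] that by force
  qed
  have inj: "inj_on fw {..<K}"
  proof (rule inj_onI)
    fix j j' assume j: "j \<in> {..<K}" "j' \<in> {..<K}" "fw j = fw j'"
    hence "j + 2 \<in> I (fw j)" "j' + 2 \<in> I (fw j)" using Ij by auto
    moreover have "fw j \<in> Perm" using pfw j by (simp add: Perm_def)
    ultimately show "j = j'" using card_one_eq[OF cI] by force
  qed
  have img: "fw ` {..<K} = Perm - F"
  proof
    show "fw ` {..<K} \<subseteq> Perm - F" using pfw C1 by (auto simp: Perm_def)
    show "Perm - F \<subseteq> fw ` {..<K}"
    proof
      fix p assume p: "p \<in> Perm - F"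
      have "I p \<noteq> {}" using cI[of p] p by (metis DiffD1 card.empty zero_neq_one)
      then obtain i where i: "i \<in> I p" by auto
      have "i \<noteq> 1" using I1' p i by auto
      moreover have "1 \<le> i" using i by (simp add: I_def)
      ultimately have "i = (i - 2) + 2" by simp
      hence "i - 2 < K \<and> fw (i - 2) = p" using Ij[of "i - 2" p] i by simp
      thus "p \<in> fw ` {..<K}" by force
    qed
  qed
  have cnt: "card {j \<in> {..<K}. Q (fw j)} = card {p \<in> Perm - F. Q p}" for Q
  proof -
    have "fw ` {j \<in> {..<K}. Q (fw j)} = {p \<in> Perm - F. Q p}" using img by auto
    moreover have "inj_on fw {j \<in> {..<K}. Q (fw j)}" using inj by (rule inj_on_subset) auto
    ultimately show ?thesis by (metis card_image)
  qed
  have tl_fw: "red (take m (fw j)) = red (take m (drop j v))" if "j < K" for j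
    using red_take_red[OF dW[OF that], of m] by (simp add: fw_def W_def min_def)
  have hd_fw: "red (drop 1 (fw j)) = red (take m (drop (Suc j) v))" if "j < K" for j
    using red_drop_red[OF dW[OF that], of 1] by (simp add: fw_def W_def drop_take)
  define Oc where "Oc = {k. k \<le> K \<and> red (take m (drop k v)) = \<sigma>}"
  define A where "A = {j \<in> {..<K}. red (take m (fw j)) = \<sigma>}"
  define B where "B = {j \<in> {..<K}. red (drop 1 (fw j)) = \<sigma>}"
  have "A \<subseteq> Oc" using tl_fw by (auto simp: A_def Oc_def)
  hence cA: "card A \<le> card Oc" by (intro card_mono) (auto simp: Oc_def)
  have "Oc \<subseteq> insert 0 (Suc ` B)"
  proof
    fix k assume k: "k \<in> Oc"
    show "k \<in> insert 0 (Suc ` B)"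
    proof (cases k)
      case (Suc j)
      hence "j \<in> B" using k hd_fw by (auto simp: Oc_def B_def)
      thus ?thesis using Suc by simp
    qed simp
  qed
  hence "card Oc \<le> card (insert 0 (Suc ` B))" by (intro card_mono) (auto simp: B_def)
  also have "\<dots> \<le> Suc (card (Suc ` B))" by (rule card_insert_le_m1) auto
  also have "\<dots> \<le> Suc (card B)" using card_image_le[of B Suc] by (simp add: B_def)
  finally have AB: "card A \<le> Suc (card B)" using cA by simp
  have finP: "finite Perm" using perm_list_finite by (simp add: Perm_def)
  have FP: "F \<subseteq> Perm" by (auto simp: F_def)
  have Fh: "red (drop 1 p) = \<sigma>" if "p \<in> F" for p using that by (simp add: F_def drop_Suc)
  have Ft: "red (take m p) \<noteq> \<sigma>" if "p \<in> F" for p using that nl by (auto simp: F_def Perm_def)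
  have indeg: "in_degree (PG m) \<sigma> = card B + card F"
  proof -
    have "in_arcs (PG m) \<sigma> = {p \<in> Perm - F. red (drop 1 p) = \<sigma>} \<union> F"
      using Fh FP by (auto simp: in_arcs_def Perm_def)
    moreover have "finite F" using FP finP finite_subset by blast
    moreover have "finite {p \<in> Perm - F. red (drop 1 p) = \<sigma>}" using finP by simp
    ultimately have "in_degree (PG m) \<sigma> = card {p \<in> Perm - F. red (drop 1 p) = \<sigma>} + card F"
      unfolding in_degree_def
    proof -
      assume a: "in_arcs (PG m) \<sigma> = {p \<in> Perm - F. red (drop 1 p) = \<sigma>} \<union> F"
        "finite F" "finite {p \<in> Perm - F. red (drop 1 p) = \<sigma>}"
      have "{p \<in> Perm - F. red (drop 1 p) = \<sigma>} \<inter> F = {}" by auto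
      thus "card (in_arcs (PG m) \<sigma>) = card {p \<in> Perm - F. red (drop 1 p) = \<sigma>} + card F"
        using a card_Un_disjoint by metis
    qed
    thus ?thesis using cnt[of "\<lambda>p. red (drop 1 p) = \<sigma>"] by (simp add: B_def)
  qed
  have outdeg: "out_degree (PG m) \<sigma> = card A"
  proof -
    have "out_arcs (PG m) \<sigma> = {p \<in> Perm - F. red (take m p) = \<sigma>}"
      using Ft FP by (auto simp: out_arcs_def Perm_def)
    thus ?thesis using cnt[of "\<lambda>p. red (take m p) = \<sigma>"] by (simp add: A_def out_degree_def)
  qed
  have "card F \<ge> 2"
  proof -
    have "ins a \<sigma> \<in> F" "ins b \<sigma> \<in> F" using ins_props[OF sg] ab by (auto simp: F_def Perm_def)
    moreover have "ins a \<sigma> \<noteq> ins b \<sigma>" using ab by (simp add: ins_def)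
    moreover have "finite F" using FP finP finite_subset by blast
    ultimately have "card {ins a \<sigma>, ins b \<sigma>} \<le> card F" by (intro card_mono) auto
    thus ?thesis using \<open>ins a \<sigma> \<noteq> ins b \<sigma>\<close> by simp
  qed
  thus False using PG_balanced[of m \<sigma>] indeg outdeg AB by simp
qed

lemma loop_inc: "red (take m (ins 1 [1..<Suc m])) = [1..<Suc m]"
proof -
  have A: "map (\<lambda>x. if x < 1 then x else Suc x) [1..<Suc m] = map Suc [1..<Suc m]" by simp
  have B: "map Suc [1..<Suc m] = [Suc 1..<Suc (Suc m)]" by (rule map_Suc_upt)
  have C: "[1..<Suc (Suc m)] = 1 # [Suc 1..<Suc (Suc m)]" by (rule upt_conv_Cons) simp
  have "ins 1 [1..<Suc m] = [1..<Suc (Suc m)]" by (simp only: ins_def A B C)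
  moreover have "take m [1..<Suc (Suc m)] = [1..<Suc m]" by (simp add: take_upt del: upt_Suc)
  ultimately show ?thesis using red_perm[OF perm_list_upt] by simp
qed

lemma rev_upt_nth: "i < m \<Longrightarrow> rev [1..<Suc m] ! i = m - i"
  by (simp add: rev_nth del: upt_Suc)

lemma loop_dec: assumes "m \<ge> 1" shows "red (take m (ins (Suc m) (rev [1..<Suc m]))) = rev [1..<Suc m]"
proof -
  have "map (\<lambda>x. if x < Suc m then x else Suc x) (rev [1..<Suc m]) = rev [1..<Suc m]"
    by (rule map_idI) auto
  hence e: "ins (Suc m) (rev [1..<Suc m]) = Suc m # rev [1..<Suc m]" by (simp add: ins_def)
  have "take m (Suc m # rev [1..<Suc m]) = map Suc (rev [1..<Suc m])"
  proof (rule nth_equalityI)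
    show "length (take m (Suc m # rev [1..<Suc m])) = length (map Suc (rev [1..<Suc m]))" by simp
    fix i assume i: "i < length (take m (Suc m # rev [1..<Suc m]))"
    hence im: "i < m" by simp
    show "take m (Suc m # rev [1..<Suc m]) ! i = map Suc (rev [1..<Suc m]) ! i"
    proof (cases i)
      case 0 thus ?thesis using im rev_upt_nth[of 0 m] by simp
    next
      case (Suc k) thus ?thesis using im rev_upt_nth[of k m] rev_upt_nth[of i m] by simp
    qed
  qed
  moreover have "red (map Suc (rev [1..<Suc m])) = rev [1..<Suc m]"
    using red_map_mono[of "rev [1..<Suc m]" Suc] red_perm[OF perm_list_rev_upt] by simp
  ultimately show ?thesis using e by simp
qed

theorem theorem5:
  fixes n a b :: nat and \<sigma> :: "nat list"
  assumes "n \<ge> 2" and "1 \<le> a" and "a < b" and "b \<le> n"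
    and "perm_list (n - 1) \<sigma>"
  shows "(\<exists>v. upword n a b v \<and> red (take (n - 1) v) = \<sigma>) \<longleftrightarrow>
         ((a = 1 \<and> \<sigma> = [1..<n]) \<or> (b = n \<and> \<sigma> = rev [1..<n]))"
proof -
  obtain m where n: "n = Suc m" using assms(1) by (cases n) auto
  have m1: "m \<ge> 1" using assms(1) n by simp
  have sg: "perm_list m \<sigma>" using assms(5) n by simp
  have ab: "1 \<le> a" "a < b" "b \<le> Suc m" using assms n by auto
  show ?thesis
  proof
    assume "\<exists>v. upword n a b v \<and> red (take (n - 1) v) = \<sigma>"
    then obtain v where "upword (Suc m) a b v" "red (take m v) = \<sigma>" using n by auto
    then obtain p where p: "perm_list (Suc m) p" "hd p \<in> {a, b}" "red (tl p) = \<sigma>" "red (take m p) = \<sigma>"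
      using only_if_loop[OF m1 sg ab] by blast
    have "red (take m p) = red (drop 1 p)" using p by (simp add: drop_Suc)
    hence "p = [1..<Suc (Suc m)] \<or> p = rev [1..<Suc (Suc m)]" using monotone_perm[OF p(1) _ m1] by simp
    thus "(a = 1 \<and> \<sigma> = [1..<n]) \<or> (b = n \<and> \<sigma> = rev [1..<n])"
    proof
      assume pe: "p = [1..<Suc (Suc m)]"
      hence "hd p = 1" by (simp add: upt_conv_Cons del: upt_Suc)
      hence "a = 1" using p(2) ab by auto
      moreover have "take m p = [1..<Suc m]" using pe by (simp add: take_upt del: upt_Suc)
      hence "\<sigma> = [1..<Suc m]" using p(4) red_perm[OF perm_list_upt] by simp
      ultimately show ?thesis using n by simp
    next
      assume pe: "p = rev [1..<Suc (Suc m)]"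
      hence pe': "p = Suc m # rev [1..<Suc m]" by simp
      hence "hd p = Suc m" by simp
      hence "b = Suc m" using p(2) ab by auto
      moreover have "\<sigma> = rev [1..<Suc m]" using p(3) pe' red_perm[OF perm_list_rev_upt] by simp
      ultimately show ?thesis using n by simp
    qed
  next
    assume "(a = 1 \<and> \<sigma> = [1..<n]) \<or> (b = n \<and> \<sigma> = rev [1..<n])"
    hence "\<exists>v. upword (Suc m) a b v \<and> red (take m v) = \<sigma>"
    proof
      assume h: "a = 1 \<and> \<sigma> = [1..<n]"
      have "red (take m (ins a \<sigma>)) = \<sigma>" using h loop_inc[of m] n by simp
      thus ?thesis using if_dir[OF m1 sg ab] by blast
    next
      assume h: "b = n \<and> \<sigma> = rev [1..<n]"
      have "red (take m (ins b \<sigma>)) = \<sigma>" using h loop_dec[OF m1] n by simp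
      thus ?thesis using if_dir[OF m1 sg ab] by blast
    qed
    thus "\<exists>v. upword n a b v \<and> red (take (n - 1) v) = \<sigma>" using n by simp
  qed
qed

end
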